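(* Let $d\ge1$, $p>1$, $s\in(0,1)$, and $\alpha_1,\alpha_2\in\mathbb{R}$ with $\alpha=\alpha_1+\alpha_2$, $\alpha_1p,\alpha_2p\in(-d,sp)$, $0\le\alpha p<sp$ and $sp-\alpha p<d$. Let $p<q<\frac{p(d-s+\alpha)}{d-sp+\alpha p}$, set $r=p\frac{q-1}{p-1}$ and \[ a=\frac{d(q-p)}{(q-1)\big(dp-(d-sp+\alpha p)q\big)}, \] where $\delta_\alpha:=dp-(d-sp+\alpha p)q>0$. Let $\mathcal{C}_\alpha>0$ be the weighted fractional Sobolev constant described in the context. Then for all $u\in\mathcal{D}^{p,q}_{s,\alpha}$, \[ \|u\|_{L^r(\mathbb{R}^d)}\le\mathcal{C}_\alpha^{a/p}\,[u]_{W^{s,p,\alpha}(\mathbb{R}^d)}^a\,\|u\|_{L^q(\mathbb{R}^d)}^{1-a}. \]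
   Context: The weighted Gagliardo seminorm is $[u]_{W^{s,p,\alpha}(\mathbb{R}^d)}^p=\int_{\mathbb{R}^d}\int_{\mathbb{R}^d}\frac{|u(x)-u(y)|^p}{|x-y|^{d+sp}}|x|^{\alpha_1p}|y|^{\alpha_2p}dx\,dy$; $W^{s,p,\alpha}(\mathbb{R}^d)$ is the closure of $C^1_c(\mathbb{R}^d)$ with respect to the norm $(\|u\|_{L^p(\mathbb{R}^d)}^p+[u]_{W^{s,p,\alpha}(\mathbb{R}^d)}^p)^{1/p}$; and $\mathcal{D}^{p,q}_{s,\alpha}=(W^{s,p,\alpha}(\mathbb{R}^d)\cap L^q(\mathbb{R}^d))\setminus\{0\}$. $\mathcal{C}_\alpha=\mathcal{C}_\alpha(d,p,s,\alpha_1,\alpha_2)>0$ is a constant such that, with $p^*_{s,\alpha}=\frac{dp}{d-sp+\alpha p}$, the weighted fractional Sobolev inequality $\|u\|_{L^{p^*_{s,\alpha}}(\mathbb{R}^d)}\le\mathcal{C}_\alpha^{1/p}[u]_{W^{s,p,\alpha}(\mathbb{R}^d)}$ holds for all $u\in W^{s,p,\alpha}(\mathbb{R}^d)$ (such a constant exists under the stated hypotheses by a fractional Caffarelli–Kohn–Nirenberg inequality of Nguyen and Squassina). *)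

theory Defs
  imports "HOL-Analysis.Analysis"
begin

text \<open>Functions on R^d are modelled as u :: 'a \<Rightarrow> real with 'a a Euclidean space,
  d = DIM('a). Integrals are Lebesgue (nonnegative, extended-valued) integrals w.r.t. lborel.\<close>

definition Lp_int :: "real \<Rightarrow> ('a::euclidean_space \<Rightarrow> real) \<Rightarrow> ennreal" where
  "Lp_int q u = (\<integral>\<^sup>+ x. ennreal (\<bar>u x\<bar> powr q) \<partial>lborel)"

definition in_Lp :: "real \<Rightarrow> ('a::euclidean_space \<Rightarrow> real) \<Rightarrow> bool" where
  "in_Lp q u \<longleftrightarrow> u \<in> borel_measurable lborel \<and> Lp_int q u < \<infinity>"

definition Lp_norm :: "real \<Rightarrow> ('a::euclidean_space \<Rightarrow> real) \<Rightarrow> real" where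
  "Lp_norm q u = enn2real (Lp_int q u) powr (1 / q)"

definition gagliardo_int ::
  "real \<Rightarrow> real \<Rightarrow> real \<Rightarrow> real \<Rightarrow> ('a::euclidean_space \<Rightarrow> real) \<Rightarrow> ennreal" where
  "gagliardo_int s p \<alpha>1 \<alpha>2 u =
     (\<integral>\<^sup>+ x. \<integral>\<^sup>+ y. ennreal (\<bar>u x - u y\<bar> powr p / norm (x - y) powr (real DIM('a) + s * p)
        * norm x powr (\<alpha>1 * p) * norm y powr (\<alpha>2 * p)) \<partial>lborel \<partial>lborel)"

definition gagliardo_seminorm ::
  "real \<Rightarrow> real \<Rightarrow> real \<Rightarrow> real \<Rightarrow> ('a::euclidean_space \<Rightarrow> real) \<Rightarrow> real" where
  "gagliardo_seminorm s p \<alpha>1 \<alpha>2 u = enn2real (gagliardo_int s p \<alpha>1 \<alpha>2 u) powr (1 / p)"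

definition C1c :: "('a::euclidean_space \<Rightarrow> real) \<Rightarrow> bool" where
  "C1c \<phi> \<longleftrightarrow> (\<forall>x. \<phi> differentiable (at x))
     \<and> (\<forall>i\<in>Basis. continuous_on UNIV (\<lambda>x. frechet_derivative \<phi> (at x) i))
     \<and> compact (closure {x. \<phi> x \<noteq> 0})"

text \<open>W^{s,p,alpha}: closure of C^1_c w.r.t. the norm (||u||_p^p + [u]^p)^(1/p), realised
  inside the measurable functions of finite norm.\<close>
definition W_space :: "real \<Rightarrow> real \<Rightarrow> real \<Rightarrow> real \<Rightarrow> ('a::euclidean_space \<Rightarrow> real) set" where
  "W_space s p \<alpha>1 \<alpha>2 = {u. u \<in> borel_measurable lborel
      \<and> Lp_int p u < \<infinity> \<and> gagliardo_int s p \<alpha>1 \<alpha>2 u < \<infinity>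
      \<and> (\<exists>\<phi>::nat \<Rightarrow> 'a \<Rightarrow> real. (\<forall>k. C1c (\<phi> k)) \<and>
          ((\<lambda>k. Lp_int p (\<lambda>x. u x - \<phi> k x) + gagliardo_int s p \<alpha>1 \<alpha>2 (\<lambda>x. u x - \<phi> k x))
             \<longlongrightarrow> 0) sequentially)}"

definition D_space :: "real \<Rightarrow> real \<Rightarrow> real \<Rightarrow> real \<Rightarrow> real \<Rightarrow> ('a::euclidean_space \<Rightarrow> real) set" where
  "D_space s p q \<alpha>1 \<alpha>2 = {u. u \<in> W_space s p \<alpha>1 \<alpha>2 \<and> in_Lp q u \<and> \<not> (AE x in lborel. u x = 0)}"

end

theory Submission
  imports Defs
begin

lemma pw_ineq:
  fixes x a b q P al be :: real
  assumes "x \<ge> 0" "a > 0" "b > 0" "q > 0" "P > 0" "al > 0" "be > 0" "al + be = 1"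
  shows "x powr (al*q + be*P) \<le> a powr al * b powr be * (al * x powr q / a + be * x powr P / b)"
proof (cases "x = 0")
  case True
  have "al*q + be*P > 0" using assms by (simp add: add_pos_pos)
  then show ?thesis using True assms by simp
next
  case False
  then have xp: "x > 0" using assms by simp
  have "x powr (al*q + be*P) = (x powr q / a) powr al * (x powr P / b) powr be * (a powr al * b powr be)"
    using xp assms by (simp add: powr_add powr_powr powr_divide mult.commute mult.left_commute divide_simps)
  also have "\<dots> \<le> (al * (x powr q / a) + be * (x powr P / b)) * (a powr al * b powr be)"
    apply (rule mult_right_mono)
    apply (rule Youngs_inequality_0) using assms xp by auto
  finally show ?thesis by (simp add: algebra_simps)
qed

lemma interp:
  fixes g :: "'b \<Rightarrow> real"
  assumes g: "g \<in> borel_measurable M" "\<And>x. g x \<ge> 0"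
    and pos: "q > 0" "P > 0" "al > 0" "be > 0" "al + be = 1"
    and A: "(\<integral>\<^sup>+x. ennreal (g x powr q) \<partial>M) = ennreal A" "A \<ge> 0"
    and B: "(\<integral>\<^sup>+x. ennreal (g x powr P) \<partial>M) = ennreal B" "B \<ge> 0"
  shows "(\<integral>\<^sup>+x. ennreal (g x powr (al*q + be*P)) \<partial>M) \<le> ennreal (A powr al * B powr be)"
proof (cases "A = 0 \<or> B = 0")
  case True
  have "AE x in M. g x = 0"
  proof (cases "A = 0")
    case True
    then have "(\<integral>\<^sup>+x. ennreal (g x powr q) \<partial>M) = 0" using A by simp
    then have "AE x in M. ennreal (g x powr q) = 0"
      by (subst (asm) nn_integral_0_iff_AE) (use g in auto)
    then show ?thesis by eventually_elim (use g in auto)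
  next
    case False
    then have "B = 0" using True by simp
    then have "(\<integral>\<^sup>+x. ennreal (g x powr P) \<partial>M) = 0" using B by simp
    then have "AE x in M. ennreal (g x powr P) = 0"
      by (subst (asm) nn_integral_0_iff_AE) (use g in auto)
    then show ?thesis by eventually_elim (use g in auto)
  qed
  then have "(\<integral>\<^sup>+x. ennreal (g x powr (al*q + be*P)) \<partial>M) = (\<integral>\<^sup>+x. 0 \<partial>M)"
    by (intro nn_integral_cong_AE) (auto elim!: eventually_mono)
  then show ?thesis by simp
next
  case False
  then have Ap: "A > 0" and Bp: "B > 0" using A B by auto
  let ?K = "A powr al * B powr be"
  have "(\<integral>\<^sup>+x. ennreal (g x powr (al*q + be*P)) \<partial>M)
      \<le> (\<integral>\<^sup>+x. ennreal (?K * (al / A)) * ennreal (g x powr q) + ennreal (?K * (be / B)) * ennreal (g x powr P) \<partial>M)"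
  proof (intro nn_integral_mono)
    fix x
    have "g x powr (al*q + be*P) \<le> ?K * (al * g x powr q / A + be * g x powr P / B)"
      by (rule pw_ineq) (use g pos Ap Bp in auto)
    also have "\<dots> = ?K * (al / A) * g x powr q + ?K * (be / B) * g x powr P"
      by (simp add: algebra_simps)
    finally show "ennreal (g x powr (al*q + be*P)) \<le> ennreal (?K * (al / A)) * ennreal (g x powr q) + ennreal (?K * (be / B)) * ennreal (g x powr P)"
      using Ap Bp pos by (simp add: ennreal_mult[symmetric] ennreal_plus[symmetric] del: ennreal_plus)
  qed
  also have "\<dots> = ennreal (?K * (al / A)) * ennreal A + ennreal (?K * (be / B)) * ennreal B"
    using g by (simp add: nn_integral_add nn_integral_cmult A B)
  also have "\<dots> = ennreal (?K * (al / A) * A + ?K * (be / B) * B)"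
    using Ap Bp pos by (simp add: ennreal_mult[symmetric] ennreal_plus[symmetric] del: ennreal_plus)
  also have "?K * (al / A) * A + ?K * (be / B) * B = ?K"
  proof -
    have "?K * (al / A) * A + ?K * (be / B) * B = (al + be) * ?K"
      using Ap Bp by (simp add: field_simps)
    then show ?thesis using pos by simp
  qed
  finally show ?thesis .
qed

theorem theorem3p2:
  fixes s p q \<alpha>1 \<alpha>2 C :: real
    and u :: "'a::euclidean_space \<Rightarrow> real"
  defines "d \<equiv> real DIM('a)"
  defines "\<alpha> \<equiv> \<alpha>1 + \<alpha>2"
  assumes hp: "p > 1" and hs: "0 < s" "s < 1"
    and ha1: "- d < \<alpha>1 * p" "\<alpha>1 * p < s * p"
    and ha2: "- d < \<alpha>2 * p" "\<alpha>2 * p < s * p"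
    and ha: "0 \<le> \<alpha> * p" "\<alpha> * p < s * p" "s * p - \<alpha> * p < d"
    and hq: "p < q" "q < p * (d - s + \<alpha>) / (d - s * p + \<alpha> * p)"
    and hC: "C > 0"
    and sob: "\<forall>v::'a \<Rightarrow> real\<in>W_space s p \<alpha>1 \<alpha>2.
                 Lp_int (d * p / (d - s * p + \<alpha> * p)) v < \<infinity> \<and>
                 Lp_norm (d * p / (d - s * p + \<alpha> * p)) v
                   \<le> C powr (1 / p) * gagliardo_seminorm s p \<alpha>1 \<alpha>2 v"
    and hu: "u \<in> D_space s p q \<alpha>1 \<alpha>2"
  shows "let r = p * (q - 1) / (p - 1);
             a = d * (q - p) / ((q - 1) * (d * p - (d - s * p + \<alpha> * p) * q))
         in Lp_int r u < \<infinity> \<and>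
            Lp_norm r u \<le> C powr (a / p) * gagliardo_seminorm s p \<alpha>1 \<alpha>2 u powr a
                            * Lp_norm q u powr (1 - a)"
proof -
  define D where "D = d - s * p + \<alpha> * p"
  define P where "P = d * p / D"
  define r where "r = p * (q - 1) / (p - 1)"
  define a where "a = d * (q - p) / ((q - 1) * (d * p - D * q))"
  have d1: "d \<ge> 1" unfolding d_def using DIM_positive[where 'a='a] by linarith
  have Dp: "D > 0" unfolding D_def using ha by linarith
  have als: "\<alpha> < s" using ha hp by (smt (verit) mult_strict_right_mono)
  have q1: "q < p * (d - s + \<alpha>) / D" using hq unfolding D_def by simp
  then have q2: "q * D < p * (d - s + \<alpha>)" using Dp by (simp add: field_simps)
  have key: "p * (d - s + \<alpha>) = d * p - d + D" unfolding D_def by (simp add: algebra_simps)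
  have "p * (d - s + \<alpha>) < p * d" using hp als by simp
  then have delta: "d * p - D * q > 0" using q2 by (simp add: algebra_simps)
  have e1: "p * (d - s + \<alpha>) - D * q > 0" using q2 by (simp add: algebra_simps)
  have hq1: "q > 1" using hp hq by simp
  have Pp: "P > 0" unfolding P_def using d1 hp Dp by simp
  define al where "al = p * (p * (d - s + \<alpha>) - D * q) / ((p - 1) * (d * p - D * q))"
  define be where "be = (q - p) * D / ((p - 1) * (d * p - D * q))"
  have alp: "al > 0" unfolding al_def using hp e1 delta by simp
  have bep: "be > 0" unfolding be_def using hp hq Dp delta by simp
  have albe: "al + be = 1"
  proof -
    have "p * (p * (d - s + \<alpha>) - D * q) + (q - p) * D = (p - 1) * (d * p - D * q)"
      unfolding key by (simp add: algebra_simps)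
    then show ?thesis unfolding al_def be_def using hp delta
      by (simp add: divide_simps add_divide_distrib[symmetric])
  qed
  define E where "E = p * (d - s + \<alpha>) - D * q"
  define dl where "dl = d * p - D * q"
  have Ek: "E = d * p - d + D - D * q" unfolding E_def key by simp
  have Ep: "E > 0" using e1 unfolding E_def .
  have dlp: "dl > 0" using delta unfolding dl_def .
  have al2: "al = p * E / ((p - 1) * dl)" unfolding al_def E_def dl_def ..
  have be2: "be = (q - p) * D / ((p - 1) * dl)" unfolding be_def dl_def ..
  have a2: "a = d * (q - p) / ((q - 1) * dl)" unfolding a_def dl_def ..
  have pm: "p - 1 > 0" "q - 1 > 0" using hp hq1 by auto
  have "al * q + be * P = (p * q * E + (q - p) * d * p) / ((p - 1) * dl)"
  proof -
    have "al * q = p * q * E / ((p - 1) * dl)" unfolding al2 by simp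
    moreover have "be * P = (q - p) * d * p / ((p - 1) * dl)"
      unfolding be2 P_def using Dp by simp
    ultimately show ?thesis by (simp add: add_divide_distrib)
  qed
  also have "p * q * E + (q - p) * d * p = p * (q - 1) * dl"
    unfolding Ek dl_def by (simp add: algebra_simps)
  also have "p * (q - 1) * dl / ((p - 1) * dl) = r"
    unfolding r_def using dlp pm by simp
  finally have rq: "al * q + be * P = r" .
  have oma: "1 - a = q * E / ((q - 1) * dl)"
  proof -
    have "(q - 1) * dl - d * (q - p) = q * E"
      unfolding Ek dl_def by (simp add: algebra_simps)
    moreover have "1 - a = ((q - 1) * dl - d * (q - p)) / ((q - 1) * dl)"
      unfolding a2 using pm dlp by (simp add: diff_divide_distrib)
    ultimately show ?thesis by simp
  qed
  have alr: "al / r = (1 - a) / q"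
  proof -
    have "al / r = E / ((q - 1) * dl)"
      unfolding al2 r_def using pm dlp hp by (simp add: divide_simps)
    moreover have "(1 - a) / q = E / ((q - 1) * dl)"
      unfolding oma using hq1 by simp
    ultimately show ?thesis by simp
  qed
  have ber: "be / r = a / P"
  proof -
    have "be / r = (q - p) * D / ((q - 1) * dl * p)"
      unfolding be2 r_def using pm dlp hp by (simp add: divide_simps)
    moreover have "a / P = (q - p) * D / ((q - 1) * dl * p)"
      unfolding a2 P_def using pm dlp hp Dp d1 by (simp add: divide_simps)
    ultimately show ?thesis by simp
  qed
  have rpos: "r > 0" unfolding r_def using hp hq1 by simp
  have a01: "0 < a" "a < 1"
  proof -
    show "0 < a" unfolding a2 using d1 hq pm dlp by simp
    have "1 - a > 0" unfolding oma using hq1 Ep pm dlp by simp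
    then show "a < 1" by simp
  qed
  from hu have uW: "u \<in> W_space s p \<alpha>1 \<alpha>2" and uq: "in_Lp q u"
    unfolding D_space_def by auto
  have meas: "u \<in> borel_measurable lborel" using uq unfolding in_Lp_def by auto
  have sob_u: "Lp_int P u < \<infinity>" "Lp_norm P u \<le> C powr (1 / p) * gagliardo_seminorm s p \<alpha>1 \<alpha>2 u"
    using sob uW unfolding P_def D_def by auto
  define A where "A = enn2real (Lp_int q u)"
  define B where "B = enn2real (Lp_int P u)"
  have A: "(\<integral>\<^sup>+x. ennreal (\<bar>u x\<bar> powr q) \<partial>lborel) = ennreal A" "A \<ge> 0"
    using uq unfolding A_def in_Lp_def Lp_int_def by (auto simp: less_top)
  have B: "(\<integral>\<^sup>+x. ennreal (\<bar>u x\<bar> powr P) \<partial>lborel) = ennreal B" "B \<ge> 0"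
    using sob_u(1) unfolding B_def Lp_int_def by (auto simp: less_top)
  have I: "Lp_int r u \<le> ennreal (A powr al * B powr be)"
    unfolding Lp_int_def rq[symmetric]
    by (rule interp[OF _ _ _ Pp alp bep albe A B]) (use meas hq1 in auto)
  have fin: "Lp_int r u < \<infinity>" using I by (simp add: le_less_trans)
  have "Lp_norm r u \<le> (A powr al * B powr be) powr (1 / r)"
    unfolding Lp_norm_def
    by (rule powr_mono2) (use I rpos in \<open>auto simp: enn2real_leI\<close>)
  also have "\<dots> = A powr ((1 - a) / q) * B powr (a / P)"
    using A(2) B(2) by (simp add: powr_mult powr_powr alr[symmetric] ber[symmetric])
  also have "A powr ((1 - a) / q) = Lp_norm q u powr (1 - a)"
    unfolding Lp_norm_def A_def[symmetric] by (simp add: powr_powr)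
  also have "B powr (a / P) = Lp_norm P u powr a"
    unfolding Lp_norm_def B_def[symmetric] by (simp add: powr_powr)
  also have "Lp_norm P u powr a \<le> (C powr (1 / p) * gagliardo_seminorm s p \<alpha>1 \<alpha>2 u) powr a"
    by (rule powr_mono2) (use a01 sob_u in \<open>auto simp: Lp_norm_def\<close>)
  also have "\<dots> = C powr (a / p) * gagliardo_seminorm s p \<alpha>1 \<alpha>2 u powr a"
    using hC by (simp add: powr_mult powr_powr gagliardo_seminorm_def)
  finally have "Lp_norm r u \<le> Lp_norm q u powr (1 - a) * (C powr (a / p) * gagliardo_seminorm s p \<alpha>1 \<alpha>2 u powr a)"
    by (simp add: mult_left_mono Lp_norm_def)
  then show ?thesis using fin unfolding r_def[symmetric] a_def D_def[symmetric] Let_def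
    by (simp add: mult_ac)
qed

end
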